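(* $\mathsf{LC}$ is $\mathsf{TNNIL}$-conservative over $\mathsf{LLe}^+$: for every $A\in\mathsf{TNNIL}$, if $\mathsf{LC}\vdash A$ then $\mathsf{LLe}^+\vdash A$.
   Context: Modal language: propositional variables, $\bot$, $\wedge,\vee,\to$, $\Box$; atomic = variables and $\bot$; $\boxdot A:=A\wedge\Box A$. $\mathsf{iK4}$: intuitionistic propositional logic in the modal language plus $\Box(A\to B)\to(\Box A\to\Box B)$ and $\Box A\to\Box\Box A$, closed under modus ponens and necessitation; $\mathsf{iGL}$: $\mathsf{iK4}$ plus Löb's axiom $\Box(\Box A\to A)\to\Box A$. $\mathsf{LC}:=\mathsf{iGL}+\{A\to\Box A\}$ (completeness principle for all $A$). $\mathsf{NOI}$: propositions in which every $\to$ lies in the scope of a $\Box$. Leivant's translation: $A^l=A$ for atomic/boxed $A$; $(A\wedge B)^l=A^l\wedge B^l$; $(A\vee B)^l=\boxdot A^l\vee\boxdot B^l$; $(A\to B)^l=A\to B^l$ if $A\in\mathsf{NOI}$, else $A\to B$. $\mathsf{LLe}^+:=\mathsf{iGL}+\{\Box A\to\Box A^l\}+\{p\to\Box p: p\text{ atomic}\}$. $\mathsf{TNNIL}$: smallest class containing atomic propositions, closed under $\wedge,\vee,\Box$, and containing $A\to B$ whenever $A,B\in\mathsf{TNNIL}$ and $A\in\mathsf{NOI}$. *)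

theory Defs
  imports Main
begin

datatype fm = Var nat | Bot | And fm fm | Or fm fm | Imp fm fm | Box fm

definition boxdot :: "fm \<Rightarrow> fm" where
  "boxdot A = And A (Box A)"

fun atomic :: "fm \<Rightarrow> bool" where
  "atomic (Var _) = True"
| "atomic Bot = True"
| "atomic _ = False"

fun noi :: "fm \<Rightarrow> bool" where
  "noi (Var _) = True"
| "noi Bot = True"
| "noi (And A B) = (noi A \<and> noi B)"
| "noi (Or A B) = (noi A \<and> noi B)"
| "noi (Imp A B) = False"
| "noi (Box A) = True"

fun leiv :: "fm \<Rightarrow> fm" where
  "leiv (Var p) = Var p"
| "leiv Bot = Bot"
| "leiv (Box A) = Box A"
| "leiv (And A B) = And (leiv A) (leiv B)"
| "leiv (Or A B) = Or (boxdot (leiv A)) (boxdot (leiv B))"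
| "leiv (Imp A B) = (if noi A then Imp A (leiv B) else Imp A B)"

inductive tnnil :: "fm \<Rightarrow> bool" where
  tn_atom: "atomic A \<Longrightarrow> tnnil A"
| tn_and: "tnnil A \<Longrightarrow> tnnil B \<Longrightarrow> tnnil (And A B)"
| tn_or: "tnnil A \<Longrightarrow> tnnil B \<Longrightarrow> tnnil (Or A B)"
| tn_box: "tnnil A \<Longrightarrow> tnnil (Box A)"
| tn_imp: "tnnil A \<Longrightarrow> tnnil B \<Longrightarrow> noi A \<Longrightarrow> tnnil (Imp A B)"

inductive deriv :: "fm set \<Rightarrow> fm \<Rightarrow> bool" for Ax :: "fm set" where
  ax_extra: "A \<in> Ax \<Longrightarrow> deriv Ax A"
| ax_k: "deriv Ax (Imp A (Imp B A))"
| ax_s: "deriv Ax (Imp (Imp A (Imp B C)) (Imp (Imp A B) (Imp A C)))"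
| ax_and1: "deriv Ax (Imp (And A B) A)"
| ax_and2: "deriv Ax (Imp (And A B) B)"
| ax_andI: "deriv Ax (Imp A (Imp B (And A B)))"
| ax_or1: "deriv Ax (Imp A (Or A B))"
| ax_or2: "deriv Ax (Imp B (Or A B))"
| ax_orE: "deriv Ax (Imp (Imp A C) (Imp (Imp B C) (Imp (Or A B) C)))"
| ax_bot: "deriv Ax (Imp Bot A)"
| ax_K: "deriv Ax (Imp (Box (Imp A B)) (Imp (Box A) (Box B)))"
| ax_4: "deriv Ax (Imp (Box A) (Box (Box A)))"
| mp: "deriv Ax (Imp A B) \<Longrightarrow> deriv Ax A \<Longrightarrow> deriv Ax B"
| nec: "deriv Ax A \<Longrightarrow> deriv Ax (Box A)"

definition lob_ax :: "fm set" where
  "lob_ax = {Imp (Box (Imp (Box A) A)) (Box A) | A. True}"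

definition iGL :: "fm \<Rightarrow> bool" where
  "iGL A \<longleftrightarrow> deriv lob_ax A"

definition LC :: "fm \<Rightarrow> bool" where
  "LC A \<longleftrightarrow> deriv (lob_ax \<union> {Imp B (Box B) | B. True}) A"

definition LLe_plus :: "fm \<Rightarrow> bool" where
  "LLe_plus A \<longleftrightarrow> deriv (lob_ax \<union> {Imp (Box B) (Box (leiv B)) | B. True}
                              \<union> {Imp p (Box p) | p. atomic p}) A"

end

theory Submission
  imports Defs
begin

inductive dh :: "fm set \<Rightarrow> fm set \<Rightarrow> fm \<Rightarrow> bool" for Ax :: "fm set" where
  dhyp: "A \<in> H \<Longrightarrow> dh Ax H A"
| dthm: "deriv Ax A \<Longrightarrow> dh Ax H A"
| dmp: "dh Ax H (Imp A B) \<Longrightarrow> dh Ax H A \<Longrightarrow> dh Ax H B"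

lemma deriv_id: "deriv Ax (Imp A A)"
proof -
  have "deriv Ax (Imp (Imp A (Imp (Imp A A) A)) (Imp (Imp A (Imp A A)) (Imp A A)))" by (rule ax_s)
  then have "deriv Ax (Imp (Imp A (Imp A A)) (Imp A A))" using ax_k mp by blast
  then show ?thesis using ax_k mp by blast
qed

lemma ded: "dh Ax H' B \<Longrightarrow> H' = insert A H \<Longrightarrow> dh Ax H (Imp A B)"
proof (induction rule: dh.induct)
  case (dhyp C)
  show ?case
  proof (cases "C = A")
    case True then show ?thesis by (simp add: dh.dthm deriv_id)
  next
    case False then have "C \<in> H" using dhyp by auto
    then show ?thesis by (meson dh.dhyp dh.dthm dh.dmp ax_k)
  qed
next
  case (dthm C) then show ?case by (meson dh.dthm dh.dmp ax_k)
next
  case (dmp C D)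
  then show ?case by (meson dh.dthm dh.dmp ax_s)
qed

lemma dh_deriv: "dh Ax H A \<Longrightarrow> H = {} \<Longrightarrow> deriv Ax A"
  by (induction rule: dh.induct) (auto intro: mp)

lemma dI: "dh Ax {X} Y \<Longrightarrow> deriv Ax (Imp X Y)"
  using ded dh_deriv by blast

lemma impI: "dh Ax (insert A H) B \<Longrightarrow> dh Ax H (Imp A B)" using ded by blast
lemma thmI: "deriv Ax (Imp A B) \<Longrightarrow> dh Ax H A \<Longrightarrow> dh Ax H B" by (meson dh.dthm dh.dmp)
lemma andI: "dh Ax H A \<Longrightarrow> dh Ax H B \<Longrightarrow> dh Ax H (And A B)" by (meson ax_andI dh.dthm dh.dmp)
lemma andE1: "dh Ax H (And A B) \<Longrightarrow> dh Ax H A" by (meson ax_and1 thmI)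
lemma andE2: "dh Ax H (And A B) \<Longrightarrow> dh Ax H B" by (meson ax_and2 thmI)
lemma orI1: "dh Ax H A \<Longrightarrow> dh Ax H (Or A B)" by (meson ax_or1 thmI)
lemma orI2: "dh Ax H B \<Longrightarrow> dh Ax H (Or A B)" by (meson ax_or2 thmI)
lemma orE: "dh Ax H (Or A B) \<Longrightarrow> dh Ax (insert A H) C \<Longrightarrow> dh Ax (insert B H) C \<Longrightarrow> dh Ax H C"
  by (meson ax_orE dh.dthm dh.dmp impI)

lemma box_mono: "deriv Ax (Imp A B) \<Longrightarrow> deriv Ax (Imp (Box A) (Box B))"
  by (meson ax_K nec mp)

lemma box_and: "deriv Ax (Imp (And (Box A) (Box B)) (Box (And A B)))"
proof (rule dI)
  have a: "dh Ax {And (Box A) (Box B)} (Box A)" by (rule andE1, rule dh.dhyp, simp)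
  have b: "dh Ax {And (Box A) (Box B)} (Box B)" by (rule andE2, rule dh.dhyp, simp)
  have c: "dh Ax {And (Box A) (Box B)} (Box (Imp B (And A B)))"
    by (rule thmI[OF box_mono[OF ax_andI] a])
  show "dh Ax {And (Box A) (Box B)} (Box (And A B))"
    by (rule dh.dmp[OF thmI[OF ax_K c] b])
qed

lemma boxI: "deriv Ax (Imp X Y) \<Longrightarrow> dh Ax H (Box X) \<Longrightarrow> dh Ax H (Box Y)"
  by (meson box_mono thmI)

lemma box2: "deriv Ax (Imp (And X Y) Z) \<Longrightarrow> dh Ax H (Box X) \<Longrightarrow> dh Ax H (Box Y) \<Longrightarrow> dh Ax H (Box Z)"
  by (meson box_and boxI andI thmI)

lemma bdI: "deriv Ax A \<Longrightarrow> deriv Ax (boxdot A)"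
  unfolding boxdot_def by (meson ax_andI mp nec)

lemma bd_mp: "dh Ax H (boxdot (Imp P Q)) \<Longrightarrow> dh Ax H P \<Longrightarrow> dh Ax H Q"
  unfolding boxdot_def by (meson andE1 dh.dmp)

lemma bd_box: "deriv Ax (Imp (boxdot X) (Box (boxdot X)))"
  unfolding boxdot_def
proof (rule dI)
  have a: "dh Ax {And X (Box X)} (Box X)" by (rule andE2, rule dh.dhyp, simp)
  show "dh Ax {And X (Box X)} (Box (And X (Box X)))"
    by (rule box2[OF deriv_id a thmI[OF ax_4 a]])
qed

lemma bdIH: "dh Ax H X \<Longrightarrow> dh Ax H (Box X) \<Longrightarrow> dh Ax H (boxdot X)"
  unfolding boxdot_def by (rule andI)

lemma bdBH: "dh Ax H (boxdot X) \<Longrightarrow> dh Ax H (Box X)"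
  unfolding boxdot_def by (rule andE2)

definition LAx :: "fm set" where
  "LAx = lob_ax \<union> {Imp (Box B) (Box (leiv B)) | B. True} \<union> {Imp p (Box p) | p. atomic p}"

definition LCAx :: "fm set" where
  "LCAx = lob_ax \<union> {Imp B (Box B) | B. True}"

fun tr :: "fm \<Rightarrow> fm" where
  "tr (Var p) = Var p"
| "tr Bot = Bot"
| "tr (And A B) = And (tr A) (tr B)"
| "tr (Or A B) = Or (tr A) (tr B)"
| "tr (Imp A B) = boxdot (Imp (tr A) (tr B))"
| "tr (Box A) = Box (tr A)"

lemma SB: "deriv LAx (Imp (tr X) (Box (tr X)))"
proof (induction X)
  case (Var n)
  show ?case by (rule ax_extra) (auto simp: LAx_def)
next
  case Bot
  show ?case by (rule ax_extra) (auto simp: LAx_def)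
next
  case (And X1 X2)
  show ?case
  proof (simp, rule dI)
    let ?H = "{And (tr X1) (tr X2)}"
    have a: "dh LAx ?H (Box (tr X1))" by (rule thmI[OF And(1)], rule andE1, rule dh.dhyp, simp)
    have b: "dh LAx ?H (Box (tr X2))" by (rule thmI[OF And(2)], rule andE2, rule dh.dhyp, simp)
    show "dh LAx ?H (Box (And (tr X1) (tr X2)))" by (rule box2[OF deriv_id a b])
  qed
next
  case (Or X1 X2)
  show ?case
  proof (simp, rule dI)
    let ?H = "{Or (tr X1) (tr X2)}"
    show "dh LAx ?H (Box (Or (tr X1) (tr X2)))"
    proof (rule orE)
      show "dh LAx ?H (Or (tr X1) (tr X2))" by (rule dh.dhyp, simp)
      show "dh LAx (insert (tr X1) ?H) (Box (Or (tr X1) (tr X2)))"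
        by (rule boxI[OF ax_or1], rule thmI[OF Or(1)], rule dh.dhyp, simp)
      show "dh LAx (insert (tr X2) ?H) (Box (Or (tr X1) (tr X2)))"
        by (rule boxI[OF ax_or2], rule thmI[OF Or(2)], rule dh.dhyp, simp)
    qed
  qed
next
  case (Imp X1 X2)
  show ?case by (simp add: bd_box)
next
  case (Box X)
  show ?case by (simp add: ax_4)
qed

lemma tr_imp: "deriv LAx (Imp (tr X) (tr Y)) \<Longrightarrow> deriv LAx (tr (Imp X Y))"
  by (simp add: bdI)

lemma tr_imp_intro:
  assumes h: "deriv LAx (Imp (tr (And X Y)) (tr Z))"
  shows "deriv LAx (Imp (tr X) (tr (Imp Y Z)))"
proof -
  have c: "deriv LAx (Imp (tr X) (Imp (tr Y) (tr Z)))"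
  proof (rule dI, rule impI)
    show "dh LAx (insert (tr Y) {tr X}) (tr Z)"
      by (rule thmI[OF h], simp, rule andI; rule dh.dhyp; simp)
  qed
  show ?thesis
  proof (simp, rule dI)
    show "dh LAx {tr X} (boxdot (Imp (tr Y) (tr Z)))"
      unfolding boxdot_def
    proof (rule andI)
      show "dh LAx {tr X} (Imp (tr Y) (tr Z))" by (rule thmI[OF c], rule dh.dhyp, simp)
      show "dh LAx {tr X} (Box (Imp (tr Y) (tr Z)))"
        by (rule boxI[OF c], rule thmI[OF SB], rule dh.dhyp, simp)
    qed
  qed
qed

lemma dh_mono_ins: "dh Ax H A \<Longrightarrow> dh Ax (insert B H) A"
  by (induction rule: dh.induct) (auto intro: dh.intros)

lemma bd_elim: "deriv Ax (Imp (boxdot X) X)"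
  unfolding boxdot_def by (rule ax_and1)

lemma main_tr: "deriv LCAx A \<Longrightarrow> deriv LAx (tr A)"
proof (induction rule: deriv.induct)
  case (ax_extra A)
  then consider (l) C where "A = Imp (Box (Imp (Box C) C)) (Box C)"
    | (c) B where "A = Imp B (Box B)"
    unfolding LCAx_def lob_ax_def by blast
  then show ?case
  proof cases
    case l
    have lob: "deriv LAx (Imp (Box (Imp (Box (tr C)) (tr C))) (Box (tr C)))"
      by (rule deriv.ax_extra) (auto simp: LAx_def lob_ax_def)
    show ?thesis unfolding l
    proof (rule tr_imp, simp, rule dI)
      show "dh LAx {Box (boxdot (Imp (Box (tr C)) (tr C)))} (Box (tr C))"
        by (rule thmI[OF lob], rule boxI[OF bd_elim], rule dh.dhyp, simp)
    qed
  next
    case c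
    show ?thesis unfolding c by (rule tr_imp, simp, rule SB)
  qed
next
  case (ax_k A B)
  show ?case by (rule tr_imp, rule tr_imp_intro, simp add: deriv.ax_and1)
next
  case (ax_s A B C)
  show ?case
  proof (rule tr_imp, rule tr_imp_intro, rule tr_imp_intro, simp, rule dI)
    let ?H = "{And (And (boxdot (Imp (tr A) (boxdot (Imp (tr B) (tr C))))) (boxdot (Imp (tr A) (tr B)))) (tr A)}"
    have h1: "dh LAx ?H (boxdot (Imp (tr A) (boxdot (Imp (tr B) (tr C)))))"
      by (rule andE1, rule andE1, rule dh.dhyp, simp)
    have h2: "dh LAx ?H (boxdot (Imp (tr A) (tr B)))"
      by (rule andE2, rule andE1, rule dh.dhyp, simp)
    have h3: "dh LAx ?H (tr A)" by (rule andE2, rule dh.dhyp, simp)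
    show "dh LAx ?H (tr C)"
      by (rule bd_mp[OF bd_mp[OF h1 h3] bd_mp[OF h2 h3]])
  qed
next
  case (ax_and1 A B)
  show ?case by (rule tr_imp, simp add: deriv.ax_and1)
next
  case (ax_and2 A B)
  show ?case by (rule tr_imp, simp add: deriv.ax_and2)
next
  case (ax_andI A B)
  show ?case by (rule tr_imp, rule tr_imp_intro, rule deriv_id)
next
  case (ax_or1 A B)
  show ?case by (rule tr_imp, simp add: deriv.ax_or1)
next
  case (ax_or2 B A)
  show ?case by (rule tr_imp, simp add: deriv.ax_or2)
next
  case (ax_orE A C B)
  show ?case
  proof (rule tr_imp, rule tr_imp_intro, rule tr_imp_intro, simp, rule dI)
    let ?H = "{And (And (boxdot (Imp (tr A) (tr C))) (boxdot (Imp (tr B) (tr C)))) (Or (tr A) (tr B))}"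
    have h1: "dh LAx ?H (boxdot (Imp (tr A) (tr C)))"
      by (rule andE1, rule andE1, rule dh.dhyp, simp)
    have h2: "dh LAx ?H (boxdot (Imp (tr B) (tr C)))"
      by (rule andE2, rule andE1, rule dh.dhyp, simp)
    have h3: "dh LAx ?H (Or (tr A) (tr B))" by (rule andE2, rule dh.dhyp, simp)
    show "dh LAx ?H (tr C)"
    proof (rule orE[OF h3])
      show "dh LAx (insert (tr A) ?H) (tr C)"
        by (rule bd_mp[OF dh_mono_ins[OF h1]], rule dh.dhyp, simp)
      show "dh LAx (insert (tr B) ?H) (tr C)"
        by (rule bd_mp[OF dh_mono_ins[OF h2]], rule dh.dhyp, simp)
    qed
  qed
next
  case (ax_bot A)
  show ?case by (rule tr_imp, simp add: deriv.ax_bot)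
next
  case (ax_K A B)
  show ?case
  proof (rule tr_imp, rule tr_imp_intro, simp, rule dI)
    let ?H = "{And (Box (boxdot (Imp (tr A) (tr B)))) (Box (tr A))}"
    have e: "deriv LAx (Imp (And (boxdot (Imp (tr A) (tr B))) (tr A)) (tr B))"
    proof (rule dI)
      let ?G = "{And (boxdot (Imp (tr A) (tr B))) (tr A)}"
      show "dh LAx ?G (tr B)"
        by (rule bd_mp; rule dh.dhyp[THEN andE1] dh.dhyp[THEN andE2]; simp)
    qed
    show "dh LAx ?H (Box (tr B))"
      by (rule box2[OF e]; rule dh.dhyp[THEN andE1] dh.dhyp[THEN andE2]; simp)
  qed
next
  case (ax_4 A)
  show ?case by (rule tr_imp, simp add: deriv.ax_4)
next
  case (mp A B)
  then show ?case by (simp add: boxdot_def) (meson deriv.ax_and1 deriv.mp)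
next
  case (nec A)
  then show ?case by (simp add: deriv.nec)
qed

lemma P_lem:
  assumes S: "deriv LAx (Imp (boxdot (leiv F)) (tr F))"
  shows "deriv LAx (Imp (Box F) (Box (tr F)))"
proof (rule dI)
  have lv: "deriv LAx (Imp (Box F) (Box (leiv F)))"
    by (rule deriv.ax_extra) (auto simp: LAx_def)
  have a: "dh LAx {Box F} (Box (leiv F))" by (rule thmI[OF lv], rule dh.dhyp, simp)
  show "dh LAx {Box F} (Box (tr F))"
    by (rule box2[OF S[unfolded boxdot_def] a thmI[OF deriv.ax_4 a]])
qed

lemma key: "tnnil E \<Longrightarrow> deriv LAx (Imp (tr E) E) \<and> deriv LAx (Imp (boxdot (leiv E)) (tr E))
   \<and> (noi E \<longrightarrow> deriv LAx (Imp E (tr E)))"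
proof (induction rule: tnnil.induct)
  case (tn_atom A)
  then have "tr A = A" "leiv A = A" by (cases A; simp)+
  then show ?case by (simp add: deriv_id bd_elim)
next
  case (tn_and A B)
  have R: "deriv LAx (Imp (tr (And A B)) (And A B))"
  proof (simp, rule dI)
    show "dh LAx {And (tr A) (tr B)} (And A B)"
      by (rule andI; rule thmI, rule conjunct1[OF tn_and(3)] conjunct1[OF tn_and(4)],
          (rule dh.dhyp[THEN andE1] dh.dhyp[THEN andE2]; simp))
  qed
  have S: "deriv LAx (Imp (boxdot (leiv (And A B))) (tr (And A B)))"
  proof (simp, rule dI)
    let ?H = "{boxdot (And (leiv A) (leiv B))}"
    have h1: "dh LAx ?H (And (leiv A) (leiv B))"
      by (rule thmI[OF bd_elim], rule dh.dhyp, simp)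
    have h2: "dh LAx ?H (Box (And (leiv A) (leiv B)))"
      by (rule bdBH, rule dh.dhyp, simp)
    have a: "dh LAx ?H (boxdot (leiv A))"
      by (rule bdIH, rule andE1[OF h1], rule boxI[OF deriv.ax_and1 h2])
    have b: "dh LAx ?H (boxdot (leiv B))"
      by (rule bdIH, rule andE2[OF h1], rule boxI[OF deriv.ax_and2 h2])
    show "dh LAx ?H (And (tr A) (tr B))"
      using tn_and(3,4) by (meson a b andI thmI)
  qed
  have N: "noi (And A B) \<longrightarrow> deriv LAx (Imp (And A B) (tr (And A B)))"
  proof (rule HOL.impI, simp, rule dI)
    assume "noi A \<and> noi B"
    then have na: "deriv LAx (Imp A (tr A))" and nb: "deriv LAx (Imp B (tr B))"
      using tn_and(3,4) by auto
    show "dh LAx {And A B} (And (tr A) (tr B))"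
      by (rule andI; rule thmI, rule na nb, (rule dh.dhyp[THEN andE1] dh.dhyp[THEN andE2]; simp))
  qed
  show ?case using R S N by blast
next
  case (tn_or A B)
  have R: "deriv LAx (Imp (tr (Or A B)) (Or A B))"
  proof (simp, rule dI)
    show "dh LAx {Or (tr A) (tr B)} (Or A B)"
      by (rule orE, rule dh.dhyp, simp, rule orI1, rule thmI[OF conjunct1[OF tn_or(3)]], rule dh.dhyp, simp,
          rule orI2, rule thmI[OF conjunct1[OF tn_or(4)]], rule dh.dhyp, simp)
  qed
  have S: "deriv LAx (Imp (boxdot (leiv (Or A B))) (tr (Or A B)))"
  proof (simp, rule dI)
    let ?H = "{boxdot (Or (boxdot (leiv A)) (boxdot (leiv B)))}"
    have sa: "deriv LAx (Imp (boxdot (leiv A)) (tr A))" using tn_or(3) by blast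
    have sb: "deriv LAx (Imp (boxdot (leiv B)) (tr B))" using tn_or(4) by blast
    show "dh LAx ?H (Or (tr A) (tr B))"
      by (rule orE, rule thmI[OF bd_elim], rule dh.dhyp, simp, rule orI1, rule thmI[OF sa], rule dh.dhyp, simp,
          rule orI2, rule thmI[OF sb], rule dh.dhyp, simp)
  qed
  have N: "noi (Or A B) \<longrightarrow> deriv LAx (Imp (Or A B) (tr (Or A B)))"
  proof (rule HOL.impI, simp, rule dI)
    assume "noi A \<and> noi B"
    then have na: "deriv LAx (Imp A (tr A))" and nb: "deriv LAx (Imp B (tr B))"
      using tn_or(3,4) by auto
    show "dh LAx {Or A B} (Or (tr A) (tr B))"
      by (rule orE, rule dh.dhyp, simp, rule orI1, rule thmI[OF na], rule dh.dhyp, simp,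
          rule orI2, rule thmI[OF nb], rule dh.dhyp, simp)
  qed
  show ?case using R S N by blast
next
  case (tn_box A)
  have P: "deriv LAx (Imp (Box A) (Box (tr A)))" using P_lem tn_box(2) by blast
  have R: "deriv LAx (Imp (tr (Box A)) (Box A))" using box_mono tn_box(2) by auto
  have S: "deriv LAx (Imp (boxdot (leiv (Box A))) (tr (Box A)))"
    by (simp, rule dI, rule thmI[OF P], rule thmI[OF bd_elim], rule dh.dhyp, simp)
  show ?case using R S P by simp
next
  case (tn_imp F G)
  have RF: "deriv LAx (Imp (tr F) F)" and NF: "deriv LAx (Imp F (tr F))"
    and RG: "deriv LAx (Imp (tr G) G)" and SG: "deriv LAx (Imp (boxdot (leiv G)) (tr G))"
    using tn_imp by auto
  have R: "deriv LAx (Imp (tr (Imp F G)) (Imp F G))"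
  proof (simp, rule dI, rule impI)
    show "dh LAx (insert F {boxdot (Imp (tr F) (tr G))}) G"
      by (rule thmI[OF RG], rule bd_mp[where P="tr F"], rule dh.dhyp, simp, rule thmI[OF NF], rule dh.dhyp, simp)
  qed
  have c: "deriv LAx (Imp (boxdot (Imp F (leiv G))) (Imp (tr F) (tr G)))"
  proof (rule dI, rule impI)
    let ?H = "insert (tr F) {boxdot (Imp F (leiv G))}"
    have f: "dh LAx ?H F" by (rule thmI[OF RF], rule dh.dhyp, simp)
    have l: "dh LAx ?H (leiv G)" by (rule bd_mp[OF _ f], rule dh.dhyp, simp)
    have bf: "dh LAx ?H (Box F)" by (rule boxI[OF RF], rule thmI[OF SB], rule dh.dhyp, simp)
    have bi: "dh LAx ?H (Box (Imp F (leiv G)))"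
      by (rule bdBH, rule dh.dhyp, simp)
    have e: "deriv LAx (Imp (And (Imp F (leiv G)) F) (leiv G))"
      by (rule dI, rule dh.dmp; rule dh.dhyp[THEN andE1] dh.dhyp[THEN andE2]; simp)
    have bl: "dh LAx ?H (Box (leiv G))" by (rule box2[OF e bi bf])
    show "dh LAx ?H (tr G)"
      by (rule thmI[OF SG], rule bdIH[OF l bl])
  qed
  have S: "deriv LAx (Imp (boxdot (leiv (Imp F G))) (tr (Imp F G)))"
  proof (simp add: tn_imp(3), rule dI)
    let ?H = "{boxdot (Imp F (leiv G))}"
    show "dh LAx ?H (boxdot (Imp (tr F) (tr G)))"
      by (rule bdIH, rule thmI[OF c], rule dh.dhyp, simp, rule boxI[OF c], rule thmI[OF bd_box],
          rule dh.dhyp, simp)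
  qed
  show ?case using R S by simp
qed

theorem theorem4p23:
  assumes "tnnil A" and "LC A"
  shows "LLe_plus A"
proof -
  have "deriv LCAx A" using assms(2) unfolding LC_def LCAx_def .
  then have "deriv LAx (tr A)" by (rule main_tr)
  moreover have "deriv LAx (Imp (tr A) A)" using key[OF assms(1)] by blast
  ultimately have "deriv LAx A" by (meson deriv.mp)
  then show ?thesis unfolding LLe_plus_def LAx_def .
qed

end
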